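(* Every pre-Hilbert $*$-category is quasi-abelian, i.e. it is additive, every morphism has a kernel and a cokernel, normal monomorphisms are stable under pushout along arbitrary morphisms, and normal epimorphisms are stable under pullback along arbitrary morphisms.
   Context: A $*$-category is a category equipped with a choice of morphism $f^*\colon Y\to X$ for each morphism $f\colon X\to Y$ such that $1^*=1$, $(gf)^*=f^*g^*$ and $(f^* )^*=f$. A morphism $f$ is an isometry if $f^*f=1$. A kernel of $f$ is an equaliser of $f$ and the zero morphism; a cokernel is dual; a normal monomorphism (resp. epimorphism) is a morphism that is a kernel (resp. cokernel) of some morphism. An orthonormal biproduct of $X_1,X_2$ is a biproduct $(X,s_1,r_1,s_2,r_2)$ with $r_k=s_k^*$. A pre-Hilbert $*$-category is a $*$-category in which (R1) there is a zero object, (R2) every pair of objects has an orthonormal biproduct, (R3) every morphism has an isometric kernel, and (R4) every diagonal $\Delta\colon X\to X\oplus X$ is a normal monomorphism. A category is additive if it has finite biproducts and the induced enrichment in commutative monoids is an enrichment in abelian groups. *)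

theory Defs
  imports "HOL-Algebra.Group"
begin

text \<open>A (small or large) category whose objects are all elements of type 'o and whose
morphisms are all elements of type 'm.  ccomp C g f is the composite g after f,
meaningful when ccod C f = cdom C g.\<close>

record ('o, 'm) cat =
  cdom :: "'m \<Rightarrow> 'o"
  ccod :: "'m \<Rightarrow> 'o"
  ccomp :: "'m \<Rightarrow> 'm \<Rightarrow> 'm"
  cid :: "'o \<Rightarrow> 'm"

definition hom :: "('o, 'm) cat \<Rightarrow> 'm \<Rightarrow> 'o \<Rightarrow> 'o \<Rightarrow> bool" where
  "hom C f X Y \<longleftrightarrow> cdom C f = X \<and> ccod C f = Y"

definition is_category :: "('o, 'm) cat \<Rightarrow> bool" where
  "is_category C \<longleftrightarrow>
     (\<forall>X. cdom C (cid C X) = X \<and> ccod C (cid C X) = X) \<and>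
     (\<forall>f g. ccod C f = cdom C g \<longrightarrow>
        cdom C (ccomp C g f) = cdom C f \<and> ccod C (ccomp C g f) = ccod C g) \<and>
     (\<forall>f. ccomp C f (cid C (cdom C f)) = f \<and> ccomp C (cid C (ccod C f)) f = f) \<and>
     (\<forall>f g h. ccod C f = cdom C g \<and> ccod C g = cdom C h \<longrightarrow>
        ccomp C h (ccomp C g f) = ccomp C (ccomp C h g) f)"

definition star_category :: "('o, 'm) cat \<Rightarrow> ('m \<Rightarrow> 'm) \<Rightarrow> bool" where
  "star_category C S \<longleftrightarrow> is_category C \<and>
     (\<forall>f. cdom C (S f) = ccod C f \<and> ccod C (S f) = cdom C f) \<and>
     (\<forall>X. S (cid C X) = cid C X) \<and>
     (\<forall>f g. ccod C f = cdom C g \<longrightarrow> S (ccomp C g f) = ccomp C (S f) (S g)) \<and>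
     (\<forall>f. S (S f) = f)"

definition isometry :: "('o, 'm) cat \<Rightarrow> ('m \<Rightarrow> 'm) \<Rightarrow> 'm \<Rightarrow> bool" where
  "isometry C S f \<longleftrightarrow> ccomp C (S f) f = cid C (cdom C f)"

definition zero_object :: "('o, 'm) cat \<Rightarrow> 'o \<Rightarrow> bool" where
  "zero_object C Z \<longleftrightarrow> (\<forall>X. (\<exists>!f. hom C f X Z) \<and> (\<exists>!f. hom C f Z X))"

text \<open>The zero morphism X \<rightarrow> Y: the morphism factoring through a zero object
(unique whenever a zero object exists).\<close>
definition zero_mor :: "('o, 'm) cat \<Rightarrow> 'o \<Rightarrow> 'o \<Rightarrow> 'm" where
  "zero_mor C X Y = (SOME f. hom C f X Y \<and>
     (\<exists>Z g h. zero_object C Z \<and> hom C g X Z \<and> hom C h Z Y \<and> f = ccomp C h g))"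

definition equaliser :: "('o, 'm) cat \<Rightarrow> 'm \<Rightarrow> 'm \<Rightarrow> 'm \<Rightarrow> bool" where
  "equaliser C f g e \<longleftrightarrow> ccod C e = cdom C f \<and>
     ccomp C f e = ccomp C g e \<and>
     (\<forall>x. ccod C x = cdom C f \<and> ccomp C f x = ccomp C g x \<longrightarrow>
        (\<exists>!u. ccod C u = cdom C e \<and> ccomp C e u = x))"

definition coequaliser :: "('o, 'm) cat \<Rightarrow> 'm \<Rightarrow> 'm \<Rightarrow> 'm \<Rightarrow> bool" where
  "coequaliser C f g c \<longleftrightarrow> cdom C c = ccod C f \<and>
     ccomp C c f = ccomp C c g \<and>
     (\<forall>x. cdom C x = ccod C f \<and> ccomp C x f = ccomp C x g \<longrightarrow>
        (\<exists>!u. cdom C u = ccod C c \<and> ccomp C u c = x))"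

definition kernel :: "('o, 'm) cat \<Rightarrow> 'm \<Rightarrow> 'm \<Rightarrow> bool" where
  "kernel C f k \<longleftrightarrow> equaliser C f (zero_mor C (cdom C f) (ccod C f)) k"

definition cokernel :: "('o, 'm) cat \<Rightarrow> 'm \<Rightarrow> 'm \<Rightarrow> bool" where
  "cokernel C f c \<longleftrightarrow> coequaliser C f (zero_mor C (cdom C f) (ccod C f)) c"

definition normal_mono :: "('o, 'm) cat \<Rightarrow> 'm \<Rightarrow> bool" where
  "normal_mono C m \<longleftrightarrow> (\<exists>f. kernel C f m)"

definition normal_epi :: "('o, 'm) cat \<Rightarrow> 'm \<Rightarrow> bool" where
  "normal_epi C e \<longleftrightarrow> (\<exists>f. cokernel C f e)"

definition product :: "('o, 'm) cat \<Rightarrow> 'o \<Rightarrow> 'o \<Rightarrow> 'o \<Rightarrow> 'm \<Rightarrow> 'm \<Rightarrow> bool" where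
  "product C X1 X2 P p1 p2 \<longleftrightarrow> hom C p1 P X1 \<and> hom C p2 P X2 \<and>
     (\<forall>Y f1 f2. hom C f1 Y X1 \<and> hom C f2 Y X2 \<longrightarrow>
        (\<exists>!u. hom C u Y P \<and> ccomp C p1 u = f1 \<and> ccomp C p2 u = f2))"

definition coproduct :: "('o, 'm) cat \<Rightarrow> 'o \<Rightarrow> 'o \<Rightarrow> 'o \<Rightarrow> 'm \<Rightarrow> 'm \<Rightarrow> bool" where
  "coproduct C X1 X2 P i1 i2 \<longleftrightarrow> hom C i1 X1 P \<and> hom C i2 X2 P \<and>
     (\<forall>Y f1 f2. hom C f1 X1 Y \<and> hom C f2 X2 Y \<longrightarrow>
        (\<exists>!u. hom C u P Y \<and> ccomp C u i1 = f1 \<and> ccomp C u i2 = f2))"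

definition biproduct :: "('o, 'm) cat \<Rightarrow> 'o \<Rightarrow> 'o \<Rightarrow> 'o \<Rightarrow> 'm \<Rightarrow> 'm \<Rightarrow> 'm \<Rightarrow> 'm \<Rightarrow> bool" where
  "biproduct C X1 X2 X s1 r1 s2 r2 \<longleftrightarrow>
     product C X1 X2 X r1 r2 \<and> coproduct C X1 X2 X s1 s2 \<and>
     ccomp C r1 s1 = cid C X1 \<and> ccomp C r2 s2 = cid C X2 \<and>
     ccomp C r1 s2 = zero_mor C X2 X1 \<and> ccomp C r2 s1 = zero_mor C X1 X2"

definition orthonormal_biproduct ::
  "('o, 'm) cat \<Rightarrow> ('m \<Rightarrow> 'm) \<Rightarrow> 'o \<Rightarrow> 'o \<Rightarrow> 'o \<Rightarrow> 'm \<Rightarrow> 'm \<Rightarrow> 'm \<Rightarrow> 'm \<Rightarrow> bool" where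
  "orthonormal_biproduct C S X1 X2 X s1 r1 s2 r2 \<longleftrightarrow>
     biproduct C X1 X2 X s1 r1 s2 r2 \<and> r1 = S s1 \<and> r2 = S s2"

definition pre_hilbert :: "('o, 'm) cat \<Rightarrow> ('m \<Rightarrow> 'm) \<Rightarrow> bool" where
  "pre_hilbert C S \<longleftrightarrow> star_category C S \<and>
     (\<exists>Z. zero_object C Z) \<and>
     (\<forall>X1 X2. \<exists>X s1 r1 s2 r2. orthonormal_biproduct C S X1 X2 X s1 r1 s2 r2) \<and>
     (\<forall>f. \<exists>k. kernel C f k \<and> isometry C S k) \<and>
     (\<forall>X B s1 r1 s2 r2 d. orthonormal_biproduct C S X X B s1 r1 s2 r2 \<and>
        hom C d X B \<and> ccomp C r1 d = cid C X \<and> ccomp C r2 d = cid C X \<longrightarrow>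
        normal_mono C d)"

definition madd :: "('o, 'm) cat \<Rightarrow> 'm \<Rightarrow> 'm \<Rightarrow> 'm" where
  "madd C f g = (SOME h. \<exists>B s1 r1 s2 r2 p d.
     biproduct C (ccod C f) (ccod C f) B s1 r1 s2 r2 \<and>
     hom C p (cdom C f) B \<and> ccomp C r1 p = f \<and> ccomp C r2 p = g \<and>
     hom C d B (ccod C f) \<and> ccomp C d s1 = cid C (ccod C f) \<and> ccomp C d s2 = cid C (ccod C f) \<and>
     h = ccomp C d p)"

definition hom_group :: "('o, 'm) cat \<Rightarrow> 'o \<Rightarrow> 'o \<Rightarrow> 'm monoid" where
  "hom_group C X Y = \<lparr>carrier = {f. hom C f X Y}, mult = madd C, one = zero_mor C X Y\<rparr>"

definition additive :: "('o, 'm) cat \<Rightarrow> bool" where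
  "additive C \<longleftrightarrow> is_category C \<and>
     (\<exists>Z. zero_object C Z) \<and>
     (\<forall>X1 X2. \<exists>X s1 r1 s2 r2. biproduct C X1 X2 X s1 r1 s2 r2) \<and>
     (\<forall>X Y. comm_group (hom_group C X Y)) \<and>
     (\<forall>f g h. cdom C f = cdom C g \<and> ccod C f = ccod C g \<and> ccod C f = cdom C h \<longrightarrow>
        ccomp C h (madd C f g) = madd C (ccomp C h f) (ccomp C h g)) \<and>
     (\<forall>f g k. cdom C f = cdom C g \<and> ccod C f = ccod C g \<and> ccod C k = cdom C f \<longrightarrow>
        ccomp C (madd C f g) k = madd C (ccomp C f k) (ccomp C g k))"

definition pushout :: "('o, 'm) cat \<Rightarrow> 'm \<Rightarrow> 'm \<Rightarrow> 'm \<Rightarrow> 'm \<Rightarrow> bool" where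
  "pushout C f g q1 q2 \<longleftrightarrow> cdom C f = cdom C g \<and>
     cdom C q1 = ccod C f \<and> cdom C q2 = ccod C g \<and> ccod C q1 = ccod C q2 \<and>
     ccomp C q1 f = ccomp C q2 g \<and>
     (\<forall>x1 x2. cdom C x1 = ccod C f \<and> cdom C x2 = ccod C g \<and> ccod C x1 = ccod C x2 \<and>
        ccomp C x1 f = ccomp C x2 g \<longrightarrow>
        (\<exists>!u. cdom C u = ccod C q1 \<and> ccomp C u q1 = x1 \<and> ccomp C u q2 = x2))"

definition pullback :: "('o, 'm) cat \<Rightarrow> 'm \<Rightarrow> 'm \<Rightarrow> 'm \<Rightarrow> 'm \<Rightarrow> bool" where
  "pullback C f g p1 p2 \<longleftrightarrow> ccod C f = ccod C g \<and>
     ccod C p1 = cdom C f \<and> ccod C p2 = cdom C g \<and> cdom C p1 = cdom C p2 \<and>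
     ccomp C f p1 = ccomp C g p2 \<and>
     (\<forall>x1 x2. ccod C x1 = cdom C f \<and> ccod C x2 = cdom C g \<and> cdom C x1 = cdom C x2 \<and>
        ccomp C f x1 = ccomp C g x2 \<longrightarrow>
        (\<exists>!u. ccod C u = cdom C p1 \<and> ccomp C p1 u = x1 \<and> ccomp C p2 u = x2))"

definition quasi_abelian :: "('o, 'm) cat \<Rightarrow> bool" where
  "quasi_abelian C \<longleftrightarrow> additive C \<and>
     (\<forall>f. \<exists>k. kernel C f k) \<and>
     (\<forall>f. \<exists>c. cokernel C f c) \<and>
     (\<forall>m f q1 q2. normal_mono C m \<and> pushout C m f q1 q2 \<longrightarrow> normal_mono C q2) \<and>
     (\<forall>e f p1 p2. normal_epi C e \<and> pullback C e f p1 p2 \<longrightarrow> normal_epi C p2)"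

end

theory Submission
  imports Defs
begin

locale ph =
  fixes C :: "('o, 'm) cat" and S :: "'m \<Rightarrow> 'm"
  assumes PH: "pre_hilbert C S"
begin

abbreviation dm where "dm \<equiv> cdom C"
abbreviation cd where "cd \<equiv> ccod C"
abbreviation cmp (infixr "\<cdot>" 70) where "g \<cdot> f \<equiv> ccomp C g f"
abbreviation idm where "idm \<equiv> cid C"
abbreviation z where "z \<equiv> zero_mor C"
abbreviation pl where "pl \<equiv> madd C"

lemma starcat: "star_category C S" using PH by (simp add: pre_hilbert_def)
lemma iscat: "is_category C" using starcat by (simp add: star_category_def)

lemma dom_id[simp]: "dm (idm X) = X" and cod_id[simp]: "cd (idm X) = X"
  using iscat by (simp_all add: is_category_def)
lemma dom_comp[simp]: "cd f = dm g \<Longrightarrow> dm (g \<cdot> f) = dm f"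
  and cod_comp[simp]: "cd f = dm g \<Longrightarrow> cd (g \<cdot> f) = cd g"
  using iscat by (simp_all add: is_category_def)
lemma comp_id_r[simp]: "dm f = X \<Longrightarrow> f \<cdot> idm X = f"
  and comp_id_l[simp]: "cd f = Y \<Longrightarrow> idm Y \<cdot> f = f"
  using iscat by (auto simp add: is_category_def)
lemma assoc[simp]: "cd f = dm g \<Longrightarrow> cd g = dm h \<Longrightarrow> (h \<cdot> g) \<cdot> f = h \<cdot> (g \<cdot> f)"
  using iscat unfolding is_category_def by metis
lemma dom_S[simp]: "dm (S f) = cd f" and cod_S[simp]: "cd (S f) = dm f"
  and S_id[simp]: "S (idm X) = idm X" and SS[simp]: "S (S f) = f"
  using starcat by (simp_all add: star_category_def)
lemma S_comp[simp]: "cd f = dm g \<Longrightarrow> S (g \<cdot> f) = S f \<cdot> S g"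
  using starcat by (simp add: star_category_def)

lemma S_inj: "S f = S g \<Longrightarrow> f = g" by (metis SS)


definition "Z0 = (SOME Z. zero_object C Z)"
definition "zin X = (THE f. hom C f X Z0)"
definition "zout Y = (THE f. hom C f Z0 Y)"

lemma Z0: "zero_object C Z0"
  using PH unfolding pre_hilbert_def Z0_def by (metis someI_ex)

lemma zo_to: "zero_object C Z \<Longrightarrow> hom C f X Z \<Longrightarrow> hom C g X Z \<Longrightarrow> f = g"
  and zo_from: "zero_object C Z \<Longrightarrow> hom C f Z X \<Longrightarrow> hom C g Z X \<Longrightarrow> f = g"
  unfolding zero_object_def by metis+

lemma zin: "hom C (zin X) X Z0" and zout: "hom C (zout Y) Z0 Y"
  using Z0 unfolding zin_def zout_def zero_object_def by (metis theI')+

lemma zero_factor: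
  assumes Z: "zero_object C Z" and g: "hom C g X Z" and h: "hom C h Z Y"
  shows "h \<cdot> g = zout Y \<cdot> zin X"
proof -
  obtain a where a: "hom C a Z Z0" using Z0 unfolding zero_object_def by metis
  obtain b where b: "hom C b Z0 Z" using Z unfolding zero_object_def by metis
  have ba: "b \<cdot> a = idm Z"
    using zo_to[OF Z, of "b \<cdot> a" Z "idm Z"] a b by (simp add: hom_def)
  have "h \<cdot> g = h \<cdot> (b \<cdot> a) \<cdot> g" using ba g h by (simp add: hom_def)
  also have "\<dots> = (h \<cdot> b) \<cdot> (a \<cdot> g)" using a b g h by (simp add: hom_def)
  also have "h \<cdot> b = zout Y" using zo_from[OF Z0, of "h \<cdot> b" Y "zout Y"] zout b h by (simp add: hom_def)
  also have "a \<cdot> g = zin X" using zo_to[OF Z0, of "a \<cdot> g" X "zin X"] zin a g by (simp add: hom_def)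
  finally show ?thesis .
qed

lemma zm_eq: "z X Y = zout Y \<cdot> zin X"
proof -
  have ex: "\<exists>f. hom C f X Y \<and>
     (\<exists>Z g h. zero_object C Z \<and> hom C g X Z \<and> hom C h Z Y \<and> f = h \<cdot> g)"
    using Z0 zin[of X] zout[of Y] unfolding hom_def
    by (intro exI[of _ "zout Y \<cdot> zin X"] conjI exI[of _ Z0] exI[of _ "zin X"] exI[of _ "zout Y"]) auto
  from someI_ex[OF ex] obtain Z g h where "zero_object C Z" "hom C g X Z" "hom C h Z Y"
     "(SOME f. hom C f X Y \<and>
     (\<exists>Z g h. zero_object C Z \<and> hom C g X Z \<and> hom C h Z Y \<and> f = h \<cdot> g)) = h \<cdot> g" by blast
  then show ?thesis unfolding zero_mor_def using zero_factor by simp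
qed

lemma dom_z[simp]: "dm (z X Y) = X" and cod_z[simp]: "cd (z X Y) = Y"
  using zin zout by (simp_all add: zm_eq hom_def)

lemma z_comp_r[simp]: "cd f = X \<Longrightarrow> z X Y \<cdot> f = z (dm f) Y"
proof -
  assume "cd f = X"
  then have "z X Y \<cdot> f = zout Y \<cdot> (zin X \<cdot> f)" using zin zout by (simp add: zm_eq hom_def)
  also have "zin X \<cdot> f = zin (dm f)" using zo_to[OF Z0, of "zin X \<cdot> f" "dm f" "zin (dm f)"] zin `cd f = X`
    by (simp add: hom_def)
  finally show ?thesis by (simp add: zm_eq)
qed

lemma z_comp_l[simp]: "dm f = Y \<Longrightarrow> f \<cdot> z X Y = z X (cd f)"
proof -
  assume "dm f = Y"
  then have "f \<cdot> z X Y = (f \<cdot> zout Y) \<cdot> zin X" using zin zout by (simp add: zm_eq hom_def)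
  also have "f \<cdot> zout Y = zout (cd f)" using zo_from[OF Z0, of "f \<cdot> zout Y" "cd f" "zout (cd f)"] zout `dm f = Y`
    by (simp add: hom_def)
  finally show ?thesis by (simp add: zm_eq)
qed

lemma S_z[simp]: "S (z X Y) = z Y X"
proof -
  have "S (z X Y) = S (zin X) \<cdot> S (zout Y)" using zin zout by (simp add: zm_eq hom_def)
  also have "S (zin X) = zout X" using zo_from[OF Z0, of "S (zin X)" X "zout X"] zin zout by (simp add: hom_def)
  also have "S (zout Y) = zin Y" using zo_to[OF Z0, of "S (zout Y)" Y "zin Y"] zin zout by (simp add: hom_def)
  finally show ?thesis by (simp add: zm_eq)
qed


lemma prod_homs: "product C X1 X2 P q1 q2 \<Longrightarrow> dm q1 = P \<and> cd q1 = X1 \<and> dm q2 = P \<and> cd q2 = X2"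
  unfolding product_def hom_def by simp
lemma coprod_homs: "coproduct C X1 X2 P j1 j2 \<Longrightarrow> dm j1 = X1 \<and> cd j1 = P \<and> dm j2 = X2 \<and> cd j2 = P"
  unfolding coproduct_def hom_def by simp

lemma prod_ex: "product C X1 X2 P q1 q2 \<Longrightarrow> dm f1 = dm f2 \<Longrightarrow> cd f1 = X1 \<Longrightarrow> cd f2 = X2 \<Longrightarrow>
   \<exists>u. dm u = dm f1 \<and> cd u = P \<and> q1 \<cdot> u = f1 \<and> q2 \<cdot> u = f2"
  unfolding product_def hom_def by metis
lemma prod_uniq: assumes "product C X1 X2 P q1 q2" "cd u = P" "cd v = P" "dm u = dm v"
  "q1 \<cdot> u = q1 \<cdot> v" "q2 \<cdot> u = q2 \<cdot> v" shows "u = v"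
proof -
  have h: "dm q1 = P \<and> cd q1 = X1 \<and> dm q2 = P \<and> cd q2 = X2" using prod_homs[OF assms(1)] .
  have "\<exists>!w. hom C w (dm u) P \<and> q1 \<cdot> w = q1 \<cdot> u \<and> q2 \<cdot> w = q2 \<cdot> u"
    using assms(1) h assms(2) unfolding product_def
    by (elim conjE allE[of _ "dm u"] allE[of _ "q1 \<cdot> u"] allE[of _ "q2 \<cdot> u"]) (simp add: hom_def)
  then show ?thesis using assms h unfolding hom_def by metis
qed
lemma coprod_ex: "coproduct C X1 X2 P j1 j2 \<Longrightarrow> cd f1 = cd f2 \<Longrightarrow> dm f1 = X1 \<Longrightarrow> dm f2 = X2 \<Longrightarrow>
   \<exists>u. dm u = P \<and> cd u = cd f1 \<and> u \<cdot> j1 = f1 \<and> u \<cdot> j2 = f2"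
  unfolding coproduct_def hom_def by metis
lemma coprod_uniq: assumes "coproduct C X1 X2 P j1 j2" "dm u = P" "dm v = P" "cd u = cd v"
  "u \<cdot> j1 = v \<cdot> j1" "u \<cdot> j2 = v \<cdot> j2" shows "u = v"
proof -
  have h: "dm j1 = X1 \<and> cd j1 = P \<and> dm j2 = X2 \<and> cd j2 = P" using coprod_homs[OF assms(1)] .
  have "\<exists>!w. hom C w P (cd u) \<and> w \<cdot> j1 = u \<cdot> j1 \<and> w \<cdot> j2 = u \<cdot> j2"
    using assms(1) h assms(2) unfolding coproduct_def
    by (elim conjE allE[of _ "cd u"] allE[of _ "u \<cdot> j1"] allE[of _ "u \<cdot> j2"]) (simp add: hom_def)
  then show ?thesis using assms h unfolding hom_def by metis
qed

lemma bp_indep: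
  assumes B: "biproduct C Y1 Y2 B s1 r1 s2 r2" and B': "biproduct C Y1 Y2 B' s1' r1' s2' r2'"
  and p: "dm p = T" "cd p = B" and p': "dm p' = T" "cd p' = B'"
  and rp: "r1 \<cdot> p = r1' \<cdot> p'" "r2 \<cdot> p = r2' \<cdot> p'"
  and d: "dm d = B" "cd d = W" and d': "dm d' = B'" "cd d' = W"
  and ds: "d \<cdot> s1 = d' \<cdot> s1'" "d \<cdot> s2 = d' \<cdot> s2'"
  shows "d \<cdot> p = d' \<cdot> p'"
proof -
  have P: "product C Y1 Y2 B r1 r2" and Q: "coproduct C Y1 Y2 B s1 s2"
    and E: "r1 \<cdot> s1 = idm Y1" "r2 \<cdot> s2 = idm Y2" "r1 \<cdot> s2 = z Y2 Y1" "r2 \<cdot> s1 = z Y1 Y2"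
    using B unfolding biproduct_def by auto
  have P': "product C Y1 Y2 B' r1' r2'" and Q': "coproduct C Y1 Y2 B' s1' s2'"
    and E': "r1' \<cdot> s1' = idm Y1" "r2' \<cdot> s2' = idm Y2" "r1' \<cdot> s2' = z Y2 Y1" "r2' \<cdot> s1' = z Y1 Y2"
    using B' unfolding biproduct_def by auto
  note h = prod_homs[OF P] coprod_homs[OF Q] prod_homs[OF P'] coprod_homs[OF Q']
  obtain phi where phi: "dm phi = B" "cd phi = B'" "r1' \<cdot> phi = r1" "r2' \<cdot> phi = r2"
    using prod_ex[OF P', of r1 r2] h by auto
  have ps1: "phi \<cdot> s1 = s1'"
    by (rule prod_uniq[OF P']) (use h phi E E' in \<open>simp_all flip: assoc\<close>)
  have ps2: "phi \<cdot> s2 = s2'"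
    by (rule prod_uniq[OF P']) (use h phi E E' in \<open>simp_all flip: assoc\<close>)
  have pp: "phi \<cdot> p = p'"
    by (rule prod_uniq[OF P']) (use h phi p p' rp in \<open>simp_all flip: assoc\<close>)
  have dd: "d' \<cdot> phi = d"
    by (rule coprod_uniq[OF Q]) (use h phi d d' ds ps1 ps2 in \<open>simp_all\<close>)
  show ?thesis using dd pp h phi p d d' by (metis assoc)
qed

definition "bpt X = (SOME t. orthonormal_biproduct C S X X (fst t) (fst (snd t)) (S (fst (snd t))) (snd (snd t)) (S (snd (snd t))))"
definition "BB X = fst (bpt X)"
definition "in1 X = fst (snd (bpt X))"
definition "in2 X = snd (snd (bpt X))"
abbreviation "pr1 X \<equiv> S (in1 X)"
abbreviation "pr2 X \<equiv> S (in2 X)"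

lemma bp: "biproduct C X X (BB X) (in1 X) (pr1 X) (in2 X) (pr2 X)"
proof -
  obtain B s1 r1 s2 r2 where "orthonormal_biproduct C S X X B s1 r1 s2 r2"
    using PH unfolding pre_hilbert_def by metis
  then have "\<exists>t. orthonormal_biproduct C S X X (fst t) (fst (snd t)) (S (fst (snd t))) (snd (snd t)) (S (snd (snd t)))"
    by (intro exI[of _ "(B,s1,s2)"]) (auto simp add: orthonormal_biproduct_def)
  from someI_ex[OF this] show ?thesis
    unfolding BB_def in1_def in2_def bpt_def orthonormal_biproduct_def by simp
qed

lemma bpP: "product C X X (BB X) (pr1 X) (pr2 X)" and bpQ: "coproduct C X X (BB X) (in1 X) (in2 X)"
  and bpE: "pr1 X \<cdot> in1 X = idm X" "pr2 X \<cdot> in2 X = idm X" "pr1 X \<cdot> in2 X = z X X" "pr2 X \<cdot> in1 X = z X X"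
  using bp[of X] unfolding biproduct_def by auto

lemma bp_homs[simp]: "dm (in1 X) = X" "cd (in1 X) = BB X" "dm (in2 X) = X" "cd (in2 X) = BB X"
  using coprod_homs[OF bpQ[of X]] by auto

lemma bpE2[simp]: "pr1 X \<cdot> in1 X = idm X" "pr2 X \<cdot> in2 X = idm X" "pr1 X \<cdot> in2 X = z X X" "pr2 X \<cdot> in1 X = z X X"
  using bpE by auto

lemma bpE3[simp]: "cd f = X \<Longrightarrow> pr1 X \<cdot> (in1 X \<cdot> f) = f" "cd f = X \<Longrightarrow> pr2 X \<cdot> (in2 X \<cdot> f) = f"
   "cd f = X \<Longrightarrow> pr1 X \<cdot> (in2 X \<cdot> f) = z (dm f) X" "cd f = X \<Longrightarrow> pr2 X \<cdot> (in1 X \<cdot> f) = z (dm f) X"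
  by (simp_all flip: assoc)

definition "pair X f g = (THE u. dm u = dm f \<and> cd u = BB X \<and> pr1 X \<cdot> u = f \<and> pr2 X \<cdot> u = g)"
definition "copair X f g = (THE u. dm u = BB X \<and> cd u = cd f \<and> u \<cdot> in1 X = f \<and> u \<cdot> in2 X = g)"

lemma pr_ext: "cd u = BB X \<Longrightarrow> cd v = BB X \<Longrightarrow> dm u = dm v \<Longrightarrow> pr1 X \<cdot> u = pr1 X \<cdot> v \<Longrightarrow> pr2 X \<cdot> u = pr2 X \<cdot> v \<Longrightarrow> u = v"
  using prod_uniq[OF bpP] by blast
lemma cop_ext: "dm u = BB X \<Longrightarrow> dm v = BB X \<Longrightarrow> cd u = cd v \<Longrightarrow> u \<cdot> in1 X = v \<cdot> in1 X \<Longrightarrow> u \<cdot> in2 X = v \<cdot> in2 X \<Longrightarrow> u = v"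
  using coprod_uniq[OF bpQ] by blast

lemma pair: assumes "cd f = X" "cd g = X" "dm g = dm f"
  shows "dm (pair X f g) = dm f \<and> cd (pair X f g) = BB X \<and> pr1 X \<cdot> pair X f g = f \<and> pr2 X \<cdot> pair X f g = g"
proof -
  obtain u where u: "dm u = dm f \<and> cd u = BB X \<and> pr1 X \<cdot> u = f \<and> pr2 X \<cdot> u = g"
    using prod_ex[OF bpP, of f g X] assms(1,2) assms(3)[symmetric] by blast
  have "\<And>v. dm v = dm f \<and> cd v = BB X \<and> pr1 X \<cdot> v = f \<and> pr2 X \<cdot> v = g \<Longrightarrow> v = u"
    subgoal for v by (rule pr_ext[of v X u]) (use u in simp_all)
    done
  then have "pair X f g = u" unfolding pair_def using u by (intro the_equality) blast+
  then show ?thesis using u by simp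
qed

lemma copair: assumes "dm f = X" "dm g = X" "cd g = cd f"
  shows "dm (copair X f g) = BB X \<and> cd (copair X f g) = cd f \<and> copair X f g \<cdot> in1 X = f \<and> copair X f g \<cdot> in2 X = g"
proof -
  obtain u where u: "dm u = BB X \<and> cd u = cd f \<and> u \<cdot> in1 X = f \<and> u \<cdot> in2 X = g"
    using coprod_ex[OF bpQ, of f g X] assms(1,2) assms(3)[symmetric] by blast
  have "\<And>v. dm v = BB X \<and> cd v = cd f \<and> v \<cdot> in1 X = f \<and> v \<cdot> in2 X = g \<Longrightarrow> v = u"
    subgoal for v by (rule cop_ext[of v X u]) (use u in simp_all)
    done
  then have "copair X f g = u" unfolding copair_def using u by (intro the_equality) blast+
  then show ?thesis using u by simp
qed

lemma pair_simps[simp]: "cd f = X \<Longrightarrow> cd g = X \<Longrightarrow> dm g = dm f \<Longrightarrow> dm (pair X f g) = dm f"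
  "cd f = X \<Longrightarrow> cd g = X \<Longrightarrow> dm g = dm f \<Longrightarrow> cd (pair X f g) = BB X"
  "cd f = X \<Longrightarrow> cd g = X \<Longrightarrow> dm g = dm f \<Longrightarrow> pr1 X \<cdot> pair X f g = f"
  "cd f = X \<Longrightarrow> cd g = X \<Longrightarrow> dm g = dm f \<Longrightarrow> pr2 X \<cdot> pair X f g = g"
  using pair by blast+
lemma copair_simps[simp]: "dm f = X \<Longrightarrow> dm g = X \<Longrightarrow> cd g = cd f \<Longrightarrow> dm (copair X f g) = BB X"
  "dm f = X \<Longrightarrow> dm g = X \<Longrightarrow> cd g = cd f \<Longrightarrow> cd (copair X f g) = cd f"
  "dm f = X \<Longrightarrow> dm g = X \<Longrightarrow> cd g = cd f \<Longrightarrow> copair X f g \<cdot> in1 X = f"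
  "dm f = X \<Longrightarrow> dm g = X \<Longrightarrow> cd g = cd f \<Longrightarrow> copair X f g \<cdot> in2 X = g"
  using copair by blast+

lemma pair_comp: "cd f = X \<Longrightarrow> cd g = X \<Longrightarrow> dm g = dm f \<Longrightarrow> cd h = dm f \<Longrightarrow>
   pair X f g \<cdot> h = pair X (f \<cdot> h) (g \<cdot> h)"
  by (rule pr_ext[of _ X]) (simp_all flip: assoc)
lemma copair_comp: "dm f = X \<Longrightarrow> dm g = X \<Longrightarrow> cd g = cd f \<Longrightarrow> dm h = cd f \<Longrightarrow>
   h \<cdot> copair X f g = copair X (h \<cdot> f) (h \<cdot> g)"
  by (rule cop_ext[of _ X]) simp_all

definition "dlt X = pair X (idm X) (idm X)"
definition "nab X = copair X (idm X) (idm X)"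

lemma dlt_simps[simp]: "dm (dlt X) = X" "cd (dlt X) = BB X" "pr1 X \<cdot> dlt X = idm X" "pr2 X \<cdot> dlt X = idm X"
  unfolding dlt_def by simp_all
lemma nab_simps[simp]: "dm (nab X) = BB X" "cd (nab X) = X" "nab X \<cdot> in1 X = idm X" "nab X \<cdot> in2 X = idm X"
  unfolding nab_def by simp_all

lemma madd_eq: assumes "dm g = dm f" "cd f = Y" "cd g = Y"
  shows "pl f g = nab Y \<cdot> pair Y f g"
proof -
  let ?P = "\<lambda>h. \<exists>B s1 r1 s2 r2 p d.
     biproduct C (cd f) (cd f) B s1 r1 s2 r2 \<and>
     hom C p (dm f) B \<and> r1 \<cdot> p = f \<and> r2 \<cdot> p = g \<and>
     hom C d B (cd f) \<and> d \<cdot> s1 = idm (cd f) \<and> d \<cdot> s2 = idm (cd f) \<and>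
     h = d \<cdot> p"
  have ex: "?P (nab Y \<cdot> pair Y f g)"
    apply (rule exI[of _ "BB Y"], rule exI[of _ "in1 Y"], rule exI[of _ "pr1 Y"], rule exI[of _ "in2 Y"],
      rule exI[of _ "pr2 Y"], rule exI[of _ "pair Y f g"], rule exI[of _ "nab Y"])
    using bp[of Y] assms unfolding hom_def by simp
  have all: "?P h \<Longrightarrow> h = nab Y \<cdot> pair Y f g" for h
  proof -
    assume "?P h"
    then obtain B s1 r1 s2 r2 p d where H: "biproduct C (cd f) (cd f) B s1 r1 s2 r2"
     "hom C p (dm f) B" "r1 \<cdot> p = f" "r2 \<cdot> p = g"
     "hom C d B (cd f)" "d \<cdot> s1 = idm (cd f)" "d \<cdot> s2 = idm (cd f)" "h = d \<cdot> p"
      by (elim exE conjE) (rule that, assumption+)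
    have hp: "dm p = dm f" "cd p = B" "dm d = B" "cd d = Y" using H(2,5) assms(2) unfolding hom_def by auto
    have "d \<cdot> p = nab Y \<cdot> pair Y f g"
      by (rule bp_indep[OF H(1)[unfolded assms(2)] bp[of Y]]) (use hp H(3,4,6,7) assms in simp_all)
    then show ?thesis using H(8) by simp
  qed
  have "?P (SOME h. ?P h)" by (rule someI[of ?P, OF ex])
  then have "(SOME h. ?P h) = nab Y \<cdot> pair Y f g" by (rule all)
  then show ?thesis unfolding madd_def .
qed


lemma pl_hom[simp]: "dm f = X \<Longrightarrow> cd f = Y \<Longrightarrow> dm g = X \<Longrightarrow> cd g = Y \<Longrightarrow> dm (pl f g) = X"
  "dm f = X \<Longrightarrow> cd f = Y \<Longrightarrow> dm g = X \<Longrightarrow> cd g = Y \<Longrightarrow> cd (pl f g) = Y"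
  by (simp_all add: madd_eq)

definition "addd X f g = copair X f g \<cdot> dlt X"

lemma addd_hom[simp]: "dm f = X \<Longrightarrow> cd f = Y \<Longrightarrow> dm g = X \<Longrightarrow> cd g = Y \<Longrightarrow> dm (addd X f g) = X"
  "dm f = X \<Longrightarrow> cd f = Y \<Longrightarrow> dm g = X \<Longrightarrow> cd g = Y \<Longrightarrow> cd (addd X f g) = Y"
  by (simp_all add: addd_def)

lemma pair_z2: "dm f = X \<Longrightarrow> cd f = Y \<Longrightarrow> pair Y f (z X Y) = in1 Y \<cdot> f"
  by (rule pr_ext[of _ Y]) simp_all
lemma pair_z1: "dm f = X \<Longrightarrow> cd f = Y \<Longrightarrow> pair Y (z X Y) f = in2 Y \<cdot> f"
  by (rule pr_ext[of _ Y]) simp_all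
lemma copair_z2: "dm f = X \<Longrightarrow> cd f = Y \<Longrightarrow> copair X f (z X Y) = f \<cdot> pr1 X"
  by (rule cop_ext[of _ X]) simp_all
lemma copair_z1: "dm f = X \<Longrightarrow> cd f = Y \<Longrightarrow> copair X (z X Y) f = f \<cdot> pr2 X"
  by (rule cop_ext[of _ X]) simp_all

lemma pl_z_r[simp]: "dm f = X \<Longrightarrow> cd f = Y \<Longrightarrow> pl f (z X Y) = f"
  by (simp add: madd_eq pair_z2 flip: assoc)
lemma pl_z_l[simp]: "dm f = X \<Longrightarrow> cd f = Y \<Longrightarrow> pl (z X Y) f = f"
  by (simp add: madd_eq pair_z1 flip: assoc)
lemma addd_z_r: "dm f = X \<Longrightarrow> cd f = Y \<Longrightarrow> addd X f (z X Y) = f"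
  by (simp add: addd_def copair_z2)
lemma addd_z_l: "dm f = X \<Longrightarrow> cd f = Y \<Longrightarrow> addd X (z X Y) f = f"
  by (simp add: addd_def copair_z1)

lemma interchange:
  assumes "dm a = X" "cd a = Y" "dm b = X" "cd b = Y" "dm c = X" "cd c = Y" "dm d = X" "cd d = Y"
  shows "pl (addd X a b) (addd X c d) = addd X (pl a c) (pl b d)"
proof -
  define M where "M = pair Y (copair X a b) (copair X c d)"
  have M: "dm M = BB X" "cd M = BB Y" using assms by (simp_all add: M_def)
  have "pl (addd X a b) (addd X c d) = nab Y \<cdot> pair Y (copair X a b \<cdot> dlt X) (copair X c d \<cdot> dlt X)"
    using assms by (simp add: madd_eq addd_def)
  also have "pair Y (copair X a b \<cdot> dlt X) (copair X c d \<cdot> dlt X) = M \<cdot> dlt X"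
    using assms by (simp add: M_def pair_comp)
  also have "nab Y \<cdot> M = copair X (nab Y \<cdot> pair Y a c) (nab Y \<cdot> pair Y b d)"
    apply (rule cop_ext[of _ X])
    using assms M by (simp_all add: M_def pair_comp)
  then have "nab Y \<cdot> (M \<cdot> dlt X) = copair X (nab Y \<cdot> pair Y a c) (nab Y \<cdot> pair Y b d) \<cdot> dlt X"
    using M by (simp flip: assoc)
  finally show ?thesis using assms by (simp add: madd_eq addd_def)
qed

lemma pl_addd: assumes "dm a = X" "cd a = Y" "dm b = X" "cd b = Y"
  shows "pl a b = addd X a b"
proof -
  have "pl a b = pl (addd X a (z X Y)) (addd X (z X Y) b)" using assms by (simp add: addd_z_r addd_z_l)
  also have "\<dots> = addd X a b" using assms by (simp add: interchange)
  finally show ?thesis .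
qed

lemma pl_comm: assumes "dm a = X" "cd a = Y" "dm b = X" "cd b = Y"
  shows "pl a b = pl b a"
proof -
  have "pl a b = pl (addd X (z X Y) a) (addd X b (z X Y))" using assms by (simp add: addd_z_r addd_z_l)
  also have "\<dots> = addd X b a" using assms by (simp add: interchange)
  finally show ?thesis using assms pl_addd by simp
qed

lemma pl_assoc: assumes "dm a = X" "cd a = Y" "dm b = X" "cd b = Y" "dm c = X" "cd c = Y"
  shows "pl (pl a b) c = pl a (pl b c)"
proof -
  have "pl (pl a b) c = pl (addd X a b) (addd X (z X Y) c)" using assms by (simp add: addd_z_l pl_addd)
  also have "\<dots> = addd X a (pl b c)" using assms by (simp add: interchange)
  finally show ?thesis using assms pl_addd by simp
qed

lemma distr_r: assumes "dm f = X" "cd f = Y" "dm g = X" "cd g = Y" "cd k = X"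
  shows "pl f g \<cdot> k = pl (f \<cdot> k) (g \<cdot> k)"
  using assms by (simp add: madd_eq pair_comp)

lemma distr_l: assumes "dm f = X" "cd f = Y" "dm g = X" "cd g = Y" "dm h = Y"
  shows "h \<cdot> pl f g = pl (h \<cdot> f) (h \<cdot> g)"
  using assms by (simp add: pl_addd[of _ X] addd_def copair_comp flip: assoc)


lemma inv_uniq: assumes "dm a = X" "cd a = Y" "dm b = X" "cd b = Y" "dm c = X" "cd c = Y"
  and "pl a b = z X Y" "pl b c = z X Y" shows "a = c"
proof -
  have 1: "pl a (pl b c) = a" using assms(1,2,8) by simp
  have 2: "pl (pl a b) c = c" using assms(5,6,7) by simp
  show ?thesis using 1 2 pl_assoc[OF assms(1-6)] by simp
qed

lemma ker_props: assumes "kernel C f k" shows "cd k = dm f" "f \<cdot> k = z (dm k) (cd f)"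
  using assms unfolding kernel_def equaliser_def by auto

lemma ker_univ: assumes "kernel C f k" "cd x = dm f" "f \<cdot> x = z (dm x) (cd f)"
  shows "\<exists>u. cd u = dm k \<and> k \<cdot> u = x"
proof -
  have H: "cd x = dm f \<and> f \<cdot> x = z (dm f) (cd f) \<cdot> x \<longrightarrow> (\<exists>!u. cd u = dm k \<and> k \<cdot> u = x)"
    using assms(1) unfolding kernel_def equaliser_def by blast
  have "z (dm f) (cd f) \<cdot> x = z (dm x) (cd f)" using assms(2) by simp
  then have "\<exists>!u. cd u = dm k \<and> k \<cdot> u = x" using H assms(2,3) by simp
  then show ?thesis by (rule ex1_implies_ex)
qed

lemma ker_mono: assumes "kernel C f k" "cd a = dm k" "cd b = dm k" "k \<cdot> a = k \<cdot> b"
  shows "a = b"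
proof -
  have K: "cd k = dm f" "f \<cdot> k = z (dm k) (cd f)" using ker_props[OF assms(1)] by auto
  have "cd (k \<cdot> a) = dm f \<and> f \<cdot> (k \<cdot> a) = z (dm (k \<cdot> a)) (cd f)"
    using K assms(2) by (simp flip: assoc)
  then have E: "\<exists>!u. cd u = dm k \<and> k \<cdot> u = k \<cdot> a"
    using assms(1) K unfolding kernel_def equaliser_def by (simp add: K(1))
  have "(THE u. cd u = dm k \<and> k \<cdot> u = k \<cdot> a) = a" by (rule the1_equality[OF E]) (use assms in simp)
  moreover have "(THE u. cd u = dm k \<and> k \<cdot> u = k \<cdot> a) = b" by (rule the1_equality[OF E]) (use assms in simp)
  ultimately show ?thesis by simp
qed

lemma coker_props: assumes "cokernel C f c" shows "dm c = cd f" "c \<cdot> f = z (dm f) (cd c)"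
  using assms unfolding cokernel_def coequaliser_def by auto

lemma coker_univ: assumes "cokernel C f c" "dm x = cd f" "x \<cdot> f = z (dm f) (cd x)"
  shows "\<exists>u. dm u = cd c \<and> u \<cdot> c = x"
proof -
  have H: "dm x = cd f \<and> x \<cdot> f = x \<cdot> z (dm f) (cd f) \<longrightarrow> (\<exists>!u. dm u = cd c \<and> u \<cdot> c = x)"
    using assms(1) unfolding cokernel_def coequaliser_def by blast
  have "x \<cdot> z (dm f) (cd f) = z (dm f) (cd x)" using assms(2) by simp
  then have "\<exists>!u. dm u = cd c \<and> u \<cdot> c = x" using H assms(2,3) by simp
  then show ?thesis by (rule ex1_implies_ex)
qed

lemma coker_epi: assumes "cokernel C f c" "dm a = cd c" "dm b = cd c" "a \<cdot> c = b \<cdot> c"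
  shows "a = b"
proof -
  have K: "dm c = cd f" "c \<cdot> f = z (dm f) (cd c)" using coker_props[OF assms(1)] by auto
  have "dm (a \<cdot> c) = cd f \<and> (a \<cdot> c) \<cdot> f = z (dm f) (cd (a \<cdot> c))"
    using K assms(2) by simp
  then have E: "\<exists>!u. dm u = cd c \<and> u \<cdot> c = a \<cdot> c"
    using assms(1) K unfolding cokernel_def coequaliser_def by (simp add: K(1))
  have "(THE u. dm u = cd c \<and> u \<cdot> c = a \<cdot> c) = a" by (rule the1_equality[OF E]) (use assms in simp)
  moreover have "(THE u. dm u = cd c \<and> u \<cdot> c = a \<cdot> c) = b" by (rule the1_equality[OF E]) (use assms in simp)
  ultimately show ?thesis by simp
qed

lemma iso_ker: "\<exists>k. kernel C f k \<and> S k \<cdot> k = idm (dm k)"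
  using PH unfolding pre_hilbert_def isometry_def by blast

lemma R4: "normal_mono C (dlt X)"
proof -
  have A: "\<forall>X B s1 r1 s2 r2 d. orthonormal_biproduct C S X X B s1 r1 s2 r2 \<and>
        hom C d X B \<and> r1 \<cdot> d = idm X \<and> r2 \<cdot> d = idm X \<longrightarrow> normal_mono C d"
    using PH unfolding pre_hilbert_def by (elim conjE) assumption
  have "orthonormal_biproduct C S X X (BB X) (in1 X) (pr1 X) (in2 X) (pr2 X)"
    using bp by (simp add: orthonormal_biproduct_def)
  moreover have "hom C (dlt X) X (BB X)" by (simp add: hom_def)
  ultimately show ?thesis
    using A[rule_format, of X "BB X" "in1 X" "pr1 X" "in2 X" "pr2 X" "dlt X"] by simp
qed

lemma id_decomp: "pl (in1 X \<cdot> pr1 X) (in2 X \<cdot> pr2 X) = idm (BB X)"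
  by (rule cop_ext[of _ X]) (simp_all add: distr_r)


lemma S_dlt: "S (dlt X) = nab X"
proof (rule cop_ext[of _ X])
  show "S (dlt X) \<cdot> in1 X = nab X \<cdot> in1 X" using S_comp[of "dlt X" "pr1 X"] by simp
  show "S (dlt X) \<cdot> in2 X = nab X \<cdot> in2 X" using S_comp[of "dlt X" "pr2 X"] by simp
qed simp_all

definition "sw X = copair X (in2 X) (in1 X)"

lemma sw_simps[simp]: "dm (sw X) = BB X" "cd (sw X) = BB X" "sw X \<cdot> in1 X = in2 X" "sw X \<cdot> in2 X = in1 X"
  by (simp_all add: sw_def)

lemma pr_sw: "pr1 X \<cdot> sw X = pr2 X" "pr2 X \<cdot> sw X = pr1 X"
  by (rule cop_ext[of _ X]; simp)+

lemma S_sw: "S (sw X) = sw X"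
proof (rule cop_ext[of _ X])
  have "S (sw X) \<cdot> in1 X = S (pr1 X \<cdot> sw X)" by simp
  then show "S (sw X) \<cdot> in1 X = sw X \<cdot> in1 X" by (simp add: pr_sw)
  have "S (sw X) \<cdot> in2 X = S (pr2 X \<cdot> sw X)" by simp
  then show "S (sw X) \<cdot> in2 X = sw X \<cdot> in2 X" by (simp add: pr_sw)
qed simp_all

lemma nab_sw: "nab X \<cdot> sw X = nab X"
  by (rule cop_ext[of _ X]) simp_all

lemma pl_in: "pl (in1 X) (in2 X) = dlt X"
  by (rule pr_ext[of _ X]) (simp_all add: distr_l)

lemma id_sw: "pl (idm (BB X)) (sw X) = dlt X \<cdot> nab X"
proof (rule cop_ext[of _ X])
  show "pl (idm (BB X)) (sw X) \<cdot> in1 X = (dlt X \<cdot> nab X) \<cdot> in1 X"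
    by (simp add: distr_r pl_in)
  show "pl (idm (BB X)) (sw X) \<cdot> in2 X = (dlt X \<cdot> nab X) \<cdot> in2 X"
    using pl_comm[of "in1 X" X "BB X" "in2 X"] by (simp add: distr_r pl_in)
qed simp_all

lemma negation: "\<exists>n. dm n = X \<and> cd n = X \<and> pl (idm X) n = z X X"
proof -
  obtain k where kk: "kernel C (nab X) k" and kiso: "S k \<cdot> k = idm (dm k)" using iso_ker by blast
  define K where "K = dm k"
  have k: "dm k = K" "cd k = BB X" "nab X \<cdot> k = z K X" using ker_props[OF kk] by (simp_all add: K_def)
  have kmono: "a = b" if "cd a = K" "cd b = K" "k \<cdot> a = k \<cdot> b" for a b
  proof -
    have "S k \<cdot> (k \<cdot> a) = S k \<cdot> (k \<cdot> b)" using that by simp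
    then show ?thesis using that(1,2) k kiso by (simp flip: assoc)
  qed
  define \<tau> where "\<tau> = S k \<cdot> sw X \<cdot> k"
  obtain u where u: "cd u = K" "k \<cdot> u = sw X \<cdot> k"
    using ker_univ[OF kk, of "sw X \<cdot> k"] k by (auto simp: nab_sw simp flip: assoc)
  have du: "dm u = K" using u k by (metis dom_comp sw_simps(1))
  have tau_u: "\<tau> = u" unfolding \<tau>_def using u du k kiso by (simp flip: u(2) assoc)
  have tau: "dm \<tau> = K" "cd \<tau> = K" "sw X \<cdot> k = k \<cdot> \<tau>" using tau_u u du by auto
  have "k \<cdot> pl (idm K) \<tau> = pl k (k \<cdot> \<tau>)" using k tau by (simp add: distr_l)
  also have "\<dots> = pl (idm (BB X)) (sw X) \<cdot> k" using k tau by (simp add: distr_r)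
  also have "\<dots> = k \<cdot> z K K" using k by (simp add: id_sw)
  finally have negK: "pl (idm K) \<tau> = z K K" using tau by (intro kmono[of "pl (idm K) \<tau>" "z K K"]) simp_all
  have Stau: "S \<tau> = \<tau>" unfolding \<tau>_def using k by (simp add: S_sw)
  define p where "p = pr1 X \<cdot> k"
  define q where "q = pr2 X \<cdot> k"
  have p: "dm p = K" "cd p = X" "dm q = K" "cd q = X" using k by (simp_all add: p_def q_def)
  have qp: "q = p \<cdot> \<tau>"
  proof -
    have "pr2 X \<cdot> k = pr1 X \<cdot> (sw X \<cdot> k)" using k by (simp add: pr_sw flip: assoc)
    also have "\<dots> = pr1 X \<cdot> (k \<cdot> \<tau>)" by (simp only: tau(3))
    also have "\<dots> = p \<cdot> \<tau>" using k tau by (simp add: p_def)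
    finally show ?thesis by (simp add: q_def)
  qed
  have Sp: "S p = S k \<cdot> in1 X" "S q = S k \<cdot> in2 X" using k by (simp_all add: p_def q_def)
  have Sq: "S q = \<tau> \<cdot> S p" using p tau by (simp add: qp Stau)
  define v where "v = S p \<cdot> p"
  have v: "dm v = K" "cd v = K" using p by (simp_all add: v_def)
  have "pl v (v \<cdot> \<tau>) = v \<cdot> pl (idm K) \<tau>" using v tau by (simp add: distr_l)
  then have 1: "pl v (v \<cdot> \<tau>) = z K K" using v negK by simp
  have "pl (v \<cdot> \<tau>) (\<tau> \<cdot> (v \<cdot> \<tau>)) = pl (idm K) \<tau> \<cdot> (v \<cdot> \<tau>)" using v tau by (simp add: distr_r)
  then have 2: "pl (v \<cdot> \<tau>) (\<tau> \<cdot> (v \<cdot> \<tau>)) = z K K" using v tau negK by simp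
  have tvt: "\<tau> \<cdot> (v \<cdot> \<tau>) = v"
    using inv_uniq[of v K K "v \<cdot> \<tau>" "\<tau> \<cdot> (v \<cdot> \<tau>)", OF _ _ _ _ _ _ 1 2] v tau by simp
  have SqQ: "S q \<cdot> q = v" 
  proof -
    have "S q \<cdot> q = \<tau> \<cdot> (v \<cdot> \<tau>)" using p tau by (simp add: Stau qp v_def)
    then show ?thesis using tvt by simp
  qed
  have "idm K = S k \<cdot> (pl (in1 X \<cdot> pr1 X) (in2 X \<cdot> pr2 X) \<cdot> k)" using kiso k by (simp add: id_decomp)
  also have "\<dots> = pl (S p \<cdot> p) (S q \<cdot> q)" using k by (simp add: distr_l distr_r p_def q_def)
  also have "\<dots> = pl v v" using SqQ by (simp add: v_def)
  also have "\<dots> = S p \<cdot> pl p p" using p by (simp add: v_def distr_l)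
  finally have idK: "idm K = S p \<cdot> pl p p" .
  obtain f where fk: "kernel C f (dlt X)" using R4 unfolding normal_mono_def by blast
  have f: "dm f = BB X" "f \<cdot> dlt X = z X (cd f)" using ker_props[OF fk] by auto
  have "nab X \<cdot> S f = z (cd f) X" using S_comp[of "dlt X" f] f by (simp add: S_dlt)
  then obtain w where w: "cd w = K" "k \<cdot> w = S f"
    using ker_univ[OF kk, of "S f"] k f by auto
  have fw: "f = S w \<cdot> S k" using w k by (metis S_comp SS dom_S)
  have Spmono: "g = h" if g: "cd g = X" "cd h = X" "dm h = dm g" "S p \<cdot> g = S p \<cdot> h" for g h
  proof -
    define x where "x = pair X g h"
    have x: "dm x = dm g" "cd x = BB X" using g by (simp_all add: x_def)
    have "S k \<cdot> x = S k \<cdot> (pl (in1 X \<cdot> pr1 X) (in2 X \<cdot> pr2 X) \<cdot> x)" using x by (simp add: id_decomp)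
    also have "\<dots> = pl (S p \<cdot> g) (S q \<cdot> h)" using k g x by (simp add: distr_l distr_r Sp x_def)
    also have "\<dots> = pl (S p \<cdot> g) (\<tau> \<cdot> (S p \<cdot> g))" using p tau g by (simp add: Sq flip: g(4))
    also have "\<dots> = pl (idm K) \<tau> \<cdot> (S p \<cdot> g)" using p tau g by (simp add: distr_r)
    also have "\<dots> = z (dm g) K" using negK p g by simp
    finally have "S k \<cdot> x = z (dm g) K" .
    then have "f \<cdot> x = z (dm x) (cd f)" using fw w k x by simp
    then obtain u where u: "cd u = X" "dlt X \<cdot> u = x" using ker_univ[OF fk, of x] x f by auto
    have "g = pr1 X \<cdot> x" using g by (simp add: x_def)
    also have "\<dots> = u" using u by (simp flip: u(2) assoc)
    finally have gu: "g = u" .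
    have "h = pr2 X \<cdot> x" using g by (simp add: x_def)
    also have "\<dots> = u" using u by (simp flip: u(2) assoc)
    finally have hu: "h = u" .
    show ?thesis using gu hu by simp
  qed
  define e where "e = pl p p"
  have e: "dm e = K" "cd e = X" "S p \<cdot> e = idm K" using p idK by (simp_all add: e_def)
  have eSp: "e \<cdot> S p = idm X"
    by (rule Spmono) (use e p in \<open>simp_all flip: assoc\<close>)
  define n where "n = e \<cdot> \<tau> \<cdot> S p"
  have "pl (idm X) n = pl (e \<cdot> S p) (e \<cdot> (\<tau> \<cdot> S p))" using eSp by (simp add: n_def)
  also have "\<dots> = e \<cdot> (pl (idm K) \<tau> \<cdot> S p)" using e p tau by (simp add: distr_l distr_r)
  also have "\<dots> = z X X" using negK e p by simp
  finally show ?thesis using e p tau by (intro exI[of _ n]) (simp add: n_def)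
qed


lemma coker_of_ker: assumes kk: "kernel C (S f) k" shows "cokernel C f (S k)"
proof -
  have k: "cd k = dm (S f)" "S f \<cdot> k = z (dm k) (cd (S f))" using ker_props[OF kk] by auto
  have k': "cd k = cd f" "S f \<cdot> k = z (dm k) (dm f)" using k by auto
  have c1: "S k \<cdot> f = z (dm f) (dm k)" using S_comp[of k "S f"] k' by simp
  show ?thesis unfolding cokernel_def coequaliser_def
  proof (intro conjI allI impI)
    show "dm (S k) = cd f" using k' by simp
    show "S k \<cdot> f = S k \<cdot> z (dm f) (cd f)" using c1 k' by simp
    fix x assume x: "dm x = cd f \<and> x \<cdot> f = x \<cdot> z (dm f) (cd f)"
    have x1: "dm x = cd f" using x by simp
    have x2: "x \<cdot> f = z (dm f) (cd x)" using x x1 by simp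
    have "S (x \<cdot> f) = S f \<cdot> S x" by (rule S_comp) (simp add: x1)
    then have "S f \<cdot> S x = z (cd x) (dm f)" using x2 by simp
    then obtain u where u: "cd u = dm k" "k \<cdot> u = S x" using ker_univ[OF kk, of "S x"] x1 by auto
    show "\<exists>!u. dm u = cd (S k) \<and> u \<cdot> S k = x"
    proof (rule ex_ex1I)
      show "\<exists>u. dm u = cd (S k) \<and> u \<cdot> S k = x"
        using u S_comp[of u k] by (intro exI[of _ "S u"]) simp
      fix u1 u2 assume "dm u1 = cd (S k) \<and> u1 \<cdot> S k = x" "dm u2 = cd (S k) \<and> u2 \<cdot> S k = x"
      then have a: "dm u1 = dm k" "dm u2 = dm k" "u1 \<cdot> S k = u2 \<cdot> S k" by auto
      have "S (u1 \<cdot> S k) = k \<cdot> S u1" by (rule trans[OF S_comp]) (simp_all add: a)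
      moreover have "S (u2 \<cdot> S k) = k \<cdot> S u2" by (rule trans[OF S_comp]) (simp_all add: a)
      ultimately have "k \<cdot> S u1 = k \<cdot> S u2" using a(3) by simp
      then have "S u1 = S u2" using ker_mono[OF kk, of "S u1" "S u2"] a by simp
      then show "u1 = u2" by (rule S_inj)
    qed
  qed
qed

lemma coker_ex: "\<exists>c. cokernel C f c"
  using iso_ker[of "S f"] coker_of_ker by blast

lemma split_of_normal_mono: assumes "normal_mono C m"
  shows "\<exists>r. dm r = cd m \<and> cd r = dm m \<and> r \<cdot> m = idm (dm m)"
proof -
  obtain g where mk: "kernel C g m" using assms unfolding normal_mono_def by blast
  obtain k where kk: "kernel C g k" and kiso: "S k \<cdot> k = idm (dm k)" using iso_ker by blast
  have m: "cd m = dm g" "g \<cdot> m = z (dm m) (cd g)" using ker_props[OF mk] by auto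
  have k: "cd k = dm g" "g \<cdot> k = z (dm k) (cd g)" using ker_props[OF kk] by auto
  obtain phi where phi: "cd phi = dm k" "k \<cdot> phi = m" using ker_univ[OF kk, of m] m by auto
  obtain psi where psi: "cd psi = dm m" "m \<cdot> psi = k" using ker_univ[OF mk, of k] k by auto
  have dphi: "dm phi = dm m" using phi by (metis dom_comp k(1) m(1))
  have dpsi: "dm psi = dm k" using psi by (metis dom_comp k(1) m(1))
  have "m \<cdot> (psi \<cdot> phi) = m \<cdot> idm (dm m)"
    using phi psi dpsi by (simp flip: assoc)
  then have pp: "psi \<cdot> phi = idm (dm m)"
    using ker_mono[OF mk, of "psi \<cdot> phi" "idm (dm m)"] phi psi dpsi by simp
  show ?thesis
  proof (intro exI[of _ "psi \<cdot> S k"] conjI)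
    show "dm (psi \<cdot> S k) = cd m" using psi dpsi k m by simp
    show "cd (psi \<cdot> S k) = dm m" using psi dpsi by simp
    have "(psi \<cdot> S k) \<cdot> m = psi \<cdot> ((S k \<cdot> k) \<cdot> phi)" using psi dpsi phi(1) k m by (simp flip: phi(2))
    then show "(psi \<cdot> S k) \<cdot> m = idm (dm m)" using kiso phi pp by simp
  qed
qed

lemma split_of_normal_epi: assumes "normal_epi C e"
  shows "\<exists>s. dm s = cd e \<and> cd s = dm e \<and> e \<cdot> s = idm (cd e)"
proof -
  obtain g where ec: "cokernel C g e" using assms unfolding normal_epi_def by blast
  obtain k where kk: "kernel C (S g) k" and kiso: "S k \<cdot> k = idm (dm k)" using iso_ker by blast
  have cc: "cokernel C g (S k)" by (rule coker_of_ker[OF kk])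
  have e: "dm e = cd g" "e \<cdot> g = z (dm g) (cd e)" using coker_props[OF ec] by auto
  have c: "dm (S k) = cd g" "S k \<cdot> g = z (dm g) (cd (S k))" using coker_props[OF cc] by auto
  obtain phi where phi: "dm phi = cd (S k)" "phi \<cdot> S k = e" using coker_univ[OF cc, of e] e by auto
  obtain psi where psi: "dm psi = cd e" "psi \<cdot> e = S k" using coker_univ[OF ec, of "S k"] c by auto
  have cphi: "cd phi = cd e" using phi by (metis cod_comp c(1) e(1))
  have cpsi: "cd psi = dm k" using psi by (metis cod_comp cod_S c(1) e(1))
  have "(phi \<cdot> psi) \<cdot> e = idm (cd e) \<cdot> e"
    using phi psi cphi cpsi by simp
  then have pp: "phi \<cdot> psi = idm (cd e)"
    using coker_epi[OF ec, of "phi \<cdot> psi" "idm (cd e)"] phi psi cpsi by simp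
  show ?thesis
  proof (intro exI[of _ "k \<cdot> psi"] conjI)
    show "dm (k \<cdot> psi) = cd e" using psi cpsi by simp
    show "cd (k \<cdot> psi) = dm e" using cpsi e c by simp
    have "e \<cdot> (k \<cdot> psi) = (phi \<cdot> (S k \<cdot> k)) \<cdot> psi" using psi cpsi phi(1) c e by (simp flip: phi(2))
    then show "e \<cdot> (k \<cdot> psi) = idm (cd e)" using kiso cpsi pp phi(1) by simp
  qed
qed

lemma split_mono_normal: assumes u: "dm u = cd q" "u \<cdot> q = idm (dm q)"
  shows "normal_mono C q"
proof -
  define P where "P = cd q"
  obtain c where cc: "cokernel C q c" using coker_ex by blast
  have c: "dm c = P" "c \<cdot> q = z (dm q) (cd c)" using coker_props[OF cc] by (auto simp: P_def)
  have cu: "cd u = dm q" using u by (metis cod_comp cod_id)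
  obtain nP where n: "dm nP = P" "cd nP = P" "pl (idm P) nP = z P P" using negation by blast
  have "kernel C c q" unfolding kernel_def equaliser_def
  proof (intro conjI allI impI)
    show "cd q = dm c" using c by (simp add: P_def)
    show "c \<cdot> q = z (dm c) (cd c) \<cdot> q" using c by (simp add: P_def)
    fix x assume x: "cd x = dm c \<and> c \<cdot> x = z (dm c) (cd c) \<cdot> x"
    have x2: "cd x = P" "c \<cdot> x = z (dm x) (cd c)" using x c by auto
    show "\<exists>!v. cd v = dm q \<and> q \<cdot> v = x"
    proof (rule ex_ex1I)
      define h where "h = pl (idm P) (nP \<cdot> q \<cdot> u)"
      have h: "dm h = P" "cd h = P" using n u cu by (simp_all add: h_def P_def)
      have "h \<cdot> q = pl q (nP \<cdot> q)" using n u cu by (simp add: h_def distr_r P_def)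
      also have "\<dots> = pl (idm P) nP \<cdot> q" using n(1,2) by (simp add: distr_r P_def)
      finally have hq: "h \<cdot> q = z (dm q) (cd h)" using n h by (simp add: P_def)
      obtain w where w: "dm w = cd c" "w \<cdot> c = h" using coker_univ[OF cc, of h] h hq by (auto simp: P_def)
      have cw: "cd w = P" using w h by (metis cod_comp)
      have "h \<cdot> x = w \<cdot> (c \<cdot> x)" using w x2 c by (simp flip: w(2))
      also have "\<dots> = z (dm x) P" using x2 w cw by simp
      finally have 1: "pl x (nP \<cdot> (q \<cdot> (u \<cdot> x))) = z (dm x) P" using x2 n u cu
        by (simp add: h_def distr_r P_def)
      have 2: "pl (nP \<cdot> (q \<cdot> (u \<cdot> x))) (q \<cdot> (u \<cdot> x)) = z (dm x) P"
      proof -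
        have "pl (nP \<cdot> (q \<cdot> (u \<cdot> x))) (q \<cdot> (u \<cdot> x)) = pl (q \<cdot> (u \<cdot> x)) (nP \<cdot> (q \<cdot> (u \<cdot> x)))"
          by (rule pl_comm[of _ "dm x" P]) (use x2 n u cu in \<open>simp_all add: P_def\<close>)
        also have "\<dots> = pl (idm P) nP \<cdot> (q \<cdot> (u \<cdot> x))" using x2 n(1,2) u cu by (simp add: distr_r P_def)
        also have "\<dots> = z (dm x) P" using n(3) x2 u cu by (simp add: P_def)
        finally show ?thesis .
      qed
      have "x = q \<cdot> (u \<cdot> x)"
        using inv_uniq[of x "dm x" P "nP \<cdot> (q \<cdot> (u \<cdot> x))" "q \<cdot> (u \<cdot> x)", OF _ _ _ _ _ _ 1 2]
          x2 n u cu by (simp add: P_def)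
      then show "\<exists>v. cd v = dm q \<and> q \<cdot> v = x" using cu x2 u by (intro exI[of _ "u \<cdot> x"]) (simp add: P_def)
    next
      fix v1 v2 assume v: "cd v1 = dm q \<and> q \<cdot> v1 = x" "cd v2 = dm q \<and> q \<cdot> v2 = x"
      then have a: "cd v1 = dm q" "cd v2 = dm q" "q \<cdot> v1 = q \<cdot> v2" by auto
      have "u \<cdot> (q \<cdot> v1) = u \<cdot> (q \<cdot> v2)" using a(3) by simp
      then show "v1 = v2" using a(1,2) u cu by (simp flip: assoc)
    qed
  qed
  then show ?thesis unfolding normal_mono_def by blast
qed

lemma split_epi_normal: assumes u: "cd u = dm p" "p \<cdot> u = idm (cd p)"
  shows "normal_epi C p"
proof -
  define P where "P = dm p"
  obtain j where jk: "kernel C p j" using iso_ker by blast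
  have j: "cd j = P" "p \<cdot> j = z (dm j) (cd p)" using ker_props[OF jk] by (auto simp: P_def)
  have du: "dm u = cd p" using u by (metis dom_comp dom_id)
  obtain nP where n: "dm nP = P" "cd nP = P" "pl (idm P) nP = z P P" using negation by blast
  have "cokernel C j p" unfolding cokernel_def coequaliser_def
  proof (intro conjI allI impI)
    show "dm p = cd j" using j by (simp add: P_def)
    show "p \<cdot> j = p \<cdot> z (dm j) (cd j)" using j by (simp add: P_def)
    fix x assume x: "dm x = cd j \<and> x \<cdot> j = x \<cdot> z (dm j) (cd j)"
    have x2: "dm x = P" "x \<cdot> j = z (dm j) (cd x)" using x j by auto
    show "\<exists>!v. dm v = cd p \<and> v \<cdot> p = x"
    proof (rule ex_ex1I)
      define h where "h = pl (idm P) (u \<cdot> p \<cdot> nP)"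
      have h: "dm h = P" "cd h = P" using n u du by (simp_all add: h_def P_def)
      have "p \<cdot> h = pl p (p \<cdot> nP)" using n u du by (simp add: h_def distr_l P_def flip: assoc)
      also have "\<dots> = p \<cdot> pl (idm P) nP" using n(1,2) by (simp add: distr_l P_def)
      finally have ph: "p \<cdot> h = z (dm h) (cd p)" using n h by (simp add: P_def)
      obtain w where w: "cd w = dm j" "j \<cdot> w = h" using ker_univ[OF jk, of h] h ph by (auto simp: P_def)
      have dw: "dm w = P" using w h by (metis dom_comp)
      have "x \<cdot> h = (x \<cdot> j) \<cdot> w" using w(1) x2(1) j by (simp flip: w(2))
      also have "\<dots> = z P (cd x)" using x2 w dw j by simp
      finally have 1: "pl x (((x \<cdot> u) \<cdot> p) \<cdot> nP) = z P (cd x)" using x2 n u du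
        by (simp add: h_def distr_l P_def)
      have 2: "pl (((x \<cdot> u) \<cdot> p) \<cdot> nP) ((x \<cdot> u) \<cdot> p) = z P (cd x)"
      proof -
        have "pl (((x \<cdot> u) \<cdot> p) \<cdot> nP) ((x \<cdot> u) \<cdot> p) = pl ((x \<cdot> u) \<cdot> p) (((x \<cdot> u) \<cdot> p) \<cdot> nP)"
          by (rule pl_comm[of _ P "cd x"]) (use x2 n u du in \<open>simp_all add: P_def\<close>)
        also have "\<dots> = ((x \<cdot> u) \<cdot> p) \<cdot> pl (idm P) nP" using x2 n(1,2) u du by (simp add: distr_l P_def)
        also have "\<dots> = z P (cd x)" using n(3) x2 u du by (simp add: P_def)
        finally show ?thesis .
      qed
      have "x = (x \<cdot> u) \<cdot> p"
        using inv_uniq[of x P "cd x" "((x \<cdot> u) \<cdot> p) \<cdot> nP" "(x \<cdot> u) \<cdot> p", OF _ _ _ _ _ _ 1 2]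
          x2 n u du by (simp add: P_def)
      then show "\<exists>v. dm v = cd p \<and> v \<cdot> p = x" using du x2 u by (intro exI[of _ "x \<cdot> u"]) (simp add: P_def)
    next
      fix v1 v2 assume v: "dm v1 = cd p \<and> v1 \<cdot> p = x" "dm v2 = cd p \<and> v2 \<cdot> p = x"
      then have a: "dm v1 = cd p" "dm v2 = cd p" "v1 \<cdot> p = v2 \<cdot> p" by auto
      have "(v1 \<cdot> p) \<cdot> u = (v2 \<cdot> p) \<cdot> u" using a(3) by simp
      then show "v1 = v2" using a(1,2) u du by simp
    qed
  qed
  then show ?thesis unfolding normal_epi_def by blast
qed


lemma hom_group_cg: "comm_group (hom_group C X Y)"
proof (rule comm_groupI)
  fix x y w
  assume x: "x \<in> carrier (hom_group C X Y)" and y: "y \<in> carrier (hom_group C X Y)"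
    and w: "w \<in> carrier (hom_group C X Y)"
  have hx: "dm x = X" "cd x = Y" and hy: "dm y = X" "cd y = Y" and hw: "dm w = X" "cd w = Y"
    using x y w by (simp_all add: hom_group_def hom_def)
  show "x \<otimes>\<^bsub>hom_group C X Y\<^esub> y \<in> carrier (hom_group C X Y)"
    using hx hy by (simp add: hom_group_def hom_def)
  show "x \<otimes>\<^bsub>hom_group C X Y\<^esub> y \<otimes>\<^bsub>hom_group C X Y\<^esub> w =
        x \<otimes>\<^bsub>hom_group C X Y\<^esub> (y \<otimes>\<^bsub>hom_group C X Y\<^esub> w)"
    using hx hy hw pl_assoc[of x X Y y w] by (simp add: hom_group_def)
  show "x \<otimes>\<^bsub>hom_group C X Y\<^esub> y = y \<otimes>\<^bsub>hom_group C X Y\<^esub> x"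
    using hx hy pl_comm[of x X Y y] by (simp add: hom_group_def)
next
  show "\<one>\<^bsub>hom_group C X Y\<^esub> \<in> carrier (hom_group C X Y)"
    by (simp add: hom_group_def hom_def)
next
  fix x assume x: "x \<in> carrier (hom_group C X Y)"
  have hx: "dm x = X" "cd x = Y" using x by (simp_all add: hom_group_def hom_def)
  show "\<one>\<^bsub>hom_group C X Y\<^esub> \<otimes>\<^bsub>hom_group C X Y\<^esub> x = x"
    using hx by (simp add: hom_group_def)
  obtain n where n: "dm n = X" "cd n = X" "pl (idm X) n = z X X" using negation by blast
  have "pl x (x \<cdot> n) = x \<cdot> pl (idm X) n" using hx n(1,2) by (simp add: distr_l)
  then have "pl x (x \<cdot> n) = z X Y" using hx n by simp
  then have "pl (x \<cdot> n) x = z X Y" using hx n pl_comm[of x X Y "x \<cdot> n"] by simp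
  then show "\<exists>y\<in>carrier (hom_group C X Y). y \<otimes>\<^bsub>hom_group C X Y\<^esub> x = \<one>\<^bsub>hom_group C X Y\<^esub>"
    using hx n by (intro bexI[of _ "x \<cdot> n"]) (simp_all add: hom_group_def hom_def)
qed

lemma is_additive: "additive C"
  unfolding additive_def
proof (intro conjI allI impI)
  show "is_category C" by (rule iscat)
  show "\<exists>Z. zero_object C Z" using Z0 by blast
  show "\<exists>X s1 r1 s2 r2. biproduct C X1 X2 X s1 r1 s2 r2" for X1 X2
  proof -
    have "\<forall>X1 X2. \<exists>X s1 r1 s2 r2. orthonormal_biproduct C S X1 X2 X s1 r1 s2 r2"
      using PH unfolding pre_hilbert_def by (elim conjE) assumption
    then obtain X s1 r1 s2 r2 where "orthonormal_biproduct C S X1 X2 X s1 r1 s2 r2" by blast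
    then show ?thesis unfolding orthonormal_biproduct_def by blast
  qed
  show "comm_group (hom_group C X Y)" for X Y by (rule hom_group_cg)
  show "h \<cdot> pl f g = pl (h \<cdot> f) (h \<cdot> g)"
    if "dm f = dm g \<and> cd f = cd g \<and> cd f = dm h" for f g h
  proof -
    have a: "dm g = dm f" "cd g = cd f" "dm h = cd f" using that by auto
    show ?thesis by (rule distr_l[of f "dm f" "cd f" g h]) (simp_all add: a)
  qed
  show "pl f g \<cdot> k = pl (f \<cdot> k) (g \<cdot> k)"
    if "dm f = dm g \<and> cd f = cd g \<and> cd k = dm f" for f g k
  proof -
    have a: "dm g = dm f" "cd g = cd f" "cd k = dm f" using that by auto
    show ?thesis by (rule distr_r[of f "dm f" "cd f" g k]) (simp_all add: a)
  qed
qed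

lemma is_qa: "quasi_abelian C"
  unfolding quasi_abelian_def
proof (intro conjI allI impI)
  show "additive C" by (rule is_additive)
  show "\<exists>k. kernel C f k" for f using iso_ker by blast
  show "\<exists>c. cokernel C f c" for f by (rule coker_ex)
  fix m f q1 q2 assume a: "normal_mono C m \<and> pushout C m f q1 q2"
  then obtain r where r: "dm r = cd m" "cd r = dm m" "r \<cdot> m = idm (dm m)"
    using split_of_normal_mono by blast
  have po: "dm m = dm f" "dm q1 = cd m" "dm q2 = cd f" "cd q1 = cd q2"
    using a unfolding pushout_def by auto
  have U: "\<forall>x1 x2. dm x1 = cd m \<and> dm x2 = cd f \<and> cd x1 = cd x2 \<and> x1 \<cdot> m = x2 \<cdot> f \<longrightarrow>
        (\<exists>!u. dm u = cd q1 \<and> u \<cdot> q1 = x1 \<and> u \<cdot> q2 = x2)"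
    using a unfolding pushout_def by blast
  have "dm (f \<cdot> r) = cd m \<and> dm (idm (cd f)) = cd f \<and> cd (f \<cdot> r) = cd (idm (cd f)) \<and>
        (f \<cdot> r) \<cdot> m = idm (cd f) \<cdot> f" using r po by simp
  then have "\<exists>!u. dm u = cd q1 \<and> u \<cdot> q1 = f \<cdot> r \<and> u \<cdot> q2 = idm (cd f)"
    by (rule U[rule_format])
  then obtain u where u: "dm u = cd q1" "u \<cdot> q2 = idm (cd f)" by blast
  show "normal_mono C q2" by (rule split_mono_normal[of u]) (use u po in simp_all)
next
  fix e f p1 p2 assume a: "normal_epi C e \<and> pullback C e f p1 p2"
  then obtain s where s: "dm s = cd e" "cd s = dm e" "e \<cdot> s = idm (cd e)"
    using split_of_normal_epi by blast
  have pb: "cd e = cd f" "cd p1 = dm e" "cd p2 = dm f" "dm p1 = dm p2"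
    using a unfolding pullback_def by auto
  have U: "\<forall>x1 x2. cd x1 = dm e \<and> cd x2 = dm f \<and> dm x1 = dm x2 \<and> e \<cdot> x1 = f \<cdot> x2 \<longrightarrow>
        (\<exists>!u. cd u = dm p1 \<and> p1 \<cdot> u = x1 \<and> p2 \<cdot> u = x2)"
    using a unfolding pullback_def by blast
  have "cd (s \<cdot> f) = dm e \<and> cd (idm (dm f)) = dm f \<and> dm (s \<cdot> f) = dm (idm (dm f)) \<and>
        e \<cdot> (s \<cdot> f) = f \<cdot> idm (dm f)" using s pb by (simp flip: assoc)
  then have "\<exists>!u. cd u = dm p1 \<and> p1 \<cdot> u = s \<cdot> f \<and> p2 \<cdot> u = idm (dm f)"
    by (rule U[rule_format])
  then obtain u where u: "cd u = dm p1" "p2 \<cdot> u = idm (dm f)" by blast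
  show "normal_epi C p2" by (rule split_epi_normal[of u]) (use u pb in simp_all)
qed

end

theorem proposition3p6:
  fixes C :: "('o, 'm) cat" and S :: "'m \<Rightarrow> 'm"
  assumes "pre_hilbert C S"
  shows "quasi_abelian C"
  by (rule ph.is_qa[of C S]) (simp add: ph_def assms)

end
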